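(* In the semi-classical setting, for every $n\ge1$ the polynomial $y=p_n$ satisfies $$W\Theta_n\, y'' = \big(W\Theta_n' - W'\Theta_n - 2V\Theta_n\big)\,y' + K_n\, y,$$ where $$K_n = (\Omega_n - V)'\Theta_n - (\Omega_n-V)\Theta_n' + \frac{\Theta_n\big(\Omega_n^2 - V^2 - a_n^2\Theta_n\Theta_{n-1}\big)}{W},$$ and $K_n$ is a polynomial.
   Context: Let $(\mu_k)_{k\ge 0}$ be complex numbers such that all Hankel determinants $\det(\mu_{i+j})_{0\le i,j\le n}$ are nonzero; $\mathcal L(x^k)=\mu_k$; $p_n(z)=\gamma_n z^n+\cdots$ ($\gamma_n\ne0$) orthonormal: $\mathcal L(p_np_m)=\delta_{n,m}$; recurrence $a_{n+1}p_{n+1}(z)=(z-b_n)p_n(z)-a_np_{n-1}(z)$, $p_{-1}=0$, $a_n=\gamma_{n-1}/\gamma_n$. $f(z)=\sum_{k\ge0}\mu_k z^{-k-1}$ (formal series); $p^{(1)}_{n-1}$ is the polynomial part of $fp_n$ and $\varepsilon_n=fp_n-p^{(1)}_{n-1}$. Semi-classical: polynomials $W\not\equiv0,V,U$ with $Wf'=2Vf+U$. For $n\ge0$, $\Theta_n = W(\varepsilon_n p_n' - \varepsilon_n' p_n) + 2V\varepsilon_n p_n$, and for $n\ge1$, $\Omega_n = a_n W(\varepsilon_{n-1}p_n' - \varepsilon_n' p_{n-1}) + a_n V(\varepsilon_{n-1}p_n + \varepsilon_n p_{n-1})$; these are polynomials in $z$. Primes denote $d/dz$. *)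

theory Defs
  imports "HOL-Computational_Algebra.Formal_Laurent_Series" "Jordan_Normal_Form.Determinant"
begin

text \<open>Encoding: formal Laurent series in z^{-1} are represented as formal Laurent series
  (type fls) in the variable w = 1/z, i.e. z corresponds to fls_X_inv.\<close>

definition zpoly :: "complex poly \<Rightarrow> complex fls" where
  "zpoly P = poly (map_poly fls_const P) fls_X_inv"

text \<open>d/dz = - w^2 d/dw\<close>
definition Dz :: "complex fls \<Rightarrow> complex fls" where
  "Dz g = - (fls_X ^ 2 * fls_deriv g)"

text \<open>polynomial part in z (all terms z^k, k \<ge> 0)\<close>
definition zpolypart :: "complex fls \<Rightarrow> complex poly" where
  "zpolypart g = fls_prpart g + [: fls_nth g 0 :]"

text \<open>f(z) = sum_k mu_k z^{-k-1}\<close>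
definition fseries :: "(nat \<Rightarrow> complex) \<Rightarrow> complex fls" where
  "fseries \<mu> = fls_X * fps_to_fls (Abs_fps \<mu>)"

definition Lfun :: "(nat \<Rightarrow> complex) \<Rightarrow> complex poly \<Rightarrow> complex" where
  "Lfun \<mu> P = (\<Sum>k\<le>degree P. coeff P k * \<mu> k)"

definition hankel_det :: "(nat \<Rightarrow> complex) \<Rightarrow> nat \<Rightarrow> complex" where
  "hankel_det \<mu> n = det (mat (Suc n) (Suc n) (\<lambda>(i, j). \<mu> (i + j)))"

definition eps :: "(nat \<Rightarrow> complex) \<Rightarrow> (nat \<Rightarrow> complex poly) \<Rightarrow> nat \<Rightarrow> complex fls" where
  "eps \<mu> p n = fseries \<mu> * zpoly (p n) - zpoly (zpolypart (fseries \<mu> * zpoly (p n)))"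

definition acoef :: "(nat \<Rightarrow> complex poly) \<Rightarrow> nat \<Rightarrow> complex" where
  "acoef p n = lead_coeff (p (n - 1)) / lead_coeff (p n)"

definition Theta :: "(nat \<Rightarrow> complex) \<Rightarrow> (nat \<Rightarrow> complex poly) \<Rightarrow> complex poly \<Rightarrow> complex poly
    \<Rightarrow> nat \<Rightarrow> complex fls" where
  "Theta \<mu> p W V n =
     zpoly W * (eps \<mu> p n * Dz (zpoly (p n)) - Dz (eps \<mu> p n) * zpoly (p n))
     + 2 * zpoly V * eps \<mu> p n * zpoly (p n)"

definition Omega :: "(nat \<Rightarrow> complex) \<Rightarrow> (nat \<Rightarrow> complex poly) \<Rightarrow> complex poly \<Rightarrow> complex poly
    \<Rightarrow> nat \<Rightarrow> complex fls" where
  "Omega \<mu> p W V n =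
     fls_const (acoef p n) * zpoly W *
        (eps \<mu> p (n - 1) * Dz (zpoly (p n)) - Dz (eps \<mu> p n) * zpoly (p (n - 1)))
     + fls_const (acoef p n) * zpoly V *
        (eps \<mu> p (n - 1) * zpoly (p n) + eps \<mu> p n * zpoly (p (n - 1)))"

definition Kcoef :: "(nat \<Rightarrow> complex) \<Rightarrow> (nat \<Rightarrow> complex poly) \<Rightarrow> complex poly \<Rightarrow> complex poly
    \<Rightarrow> nat \<Rightarrow> complex fls" where
  "Kcoef \<mu> p W V n =
     (let \<Theta> = Theta \<mu> p W V n; \<Omega> = Omega \<mu> p W V n; Vz = zpoly V;
          a = fls_const (acoef p n) in
      Dz (\<Omega> - Vz) * \<Theta> - (\<Omega> - Vz) * Dz \<Theta>
      + \<Theta> * (\<Omega> ^ 2 - Vz ^ 2 - a ^ 2 * \<Theta> * Theta \<mu> p W V (n - 1)) / zpoly W)"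

end

theory Submission
  imports Defs
begin

lemma zpoly_pCons: "zpoly (pCons c P) = fls_const c + fls_X_inv * zpoly P"
  by (simp add: zpoly_def map_poly_pCons)

lemma zpoly_0[simp]: "zpoly 0 = 0" by (simp add: zpoly_def)
lemma zpoly_const[simp]: "zpoly [:c:] = fls_const c" by (simp add: zpoly_pCons)
lemma zpoly_1[simp]: "zpoly 1 = 1" by (simp add: one_pCons zpoly_pCons del: pCons_one)

lemma zpoly_add[simp]: "zpoly (P + Q) = zpoly P + zpoly Q"
proof (induction P arbitrary: Q)
  case (pCons a P)
  obtain b q where Q: "Q = pCons b q" by (cases Q) auto
  show ?case using pCons.IH[of q] by (simp add: Q zpoly_pCons algebra_simps fls_plus_const[symmetric])
qed simp

lemma zpoly_minus[simp]: "zpoly (- P) = - zpoly P"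
  by (induction P) (simp_all add: zpoly_pCons algebra_simps)

lemma zpoly_diff[simp]: "zpoly (P - Q) = zpoly P - zpoly Q"
  using zpoly_add[of P "-Q"] by simp

lemma zpoly_smult[simp]: "zpoly (Polynomial.smult c P) = fls_const c * zpoly P"
  by (induction P) (simp_all add: zpoly_pCons algebra_simps)

lemma zpoly_mult[simp]: "zpoly (P * Q) = zpoly P * zpoly Q"
  by (induction P) (simp_all add: zpoly_pCons algebra_simps)

lemma zpoly_power[simp]: "zpoly (P ^ k) = zpoly P ^ k"
  by (induction k) simp_all

lemma zpoly_numeral[simp]: "zpoly (numeral k) = numeral k"
  by (simp add: numeral_poly)

lemma Dz_add[simp]: "Dz (a + b) = Dz a + Dz b" by (simp add: Dz_def algebra_simps)
lemma Dz_diff[simp]: "Dz (a - b) = Dz a - Dz b" by (simp add: Dz_def algebra_simps)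
lemma Dz_minus[simp]: "Dz (- a) = - Dz a" by (simp add: Dz_def algebra_simps)
lemma Dz_mult[simp]: "Dz (a * b) = Dz a * b + a * Dz b" by (simp add: Dz_def algebra_simps)
lemma Dz_const[simp]: "Dz (fls_const c) = 0" by (simp add: Dz_def)
lemma Dz_0[simp]: "Dz 0 = 0" by (simp add: Dz_def)
lemma Dz_1[simp]: "Dz 1 = 0" by (simp add: Dz_def)
lemma Dz_numeral[simp]: "Dz (numeral k) = 0" by (simp add: Dz_def)
lemma Dz_power2: "Dz (a ^ 2) = 2 * a * Dz a" by (simp add: power2_eq_square algebra_simps)

lemma Dz_X_inv: "Dz fls_X_inv = 1"
proof -
  have "fls_X * fls_X_inv = (1::complex fls)" by (simp flip: fls_inverse_X)
  then show ?thesis by (simp add: Dz_def power2_eq_square) (metis mult.assoc mult.commute mult.left_neutral)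
qed

lemma Dz_zpoly[simp]: "Dz (zpoly P) = zpoly (pderiv P)"
  by (induction P) (simp_all add: zpoly_pCons pderiv_pCons Dz_X_inv algebra_simps)

lemma zpoly_nth: "fls_nth (zpoly P) k = (if k \<le> 0 then coeff P (nat (-k)) else 0)"
proof (induction P arbitrary: k)
  case (pCons a P)
  have e: "fls_nth (zpoly (pCons a P)) k = (if k = 0 then a else 0) + fls_nth (zpoly P) (k + 1)"
    by (simp add: zpoly_pCons fls_X_inv_times_conv_shift)
  consider "k = 0" | "k > 0" | "k < 0" by linarith
  then show ?case
  proof cases
    case 3
    then have "nat (-k) = Suc (nat (- (k + 1)))" by simp
    then show ?thesis using 3 by (simp add: e pCons.IH)
  qed (use e in \<open>simp_all add: pCons.IH\<close>)
qed simp

lemma zpoly_eq_iff: "zpoly P = zpoly Q \<longleftrightarrow> P = Q"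
proof
  assume "zpoly P = zpoly Q"
  then have "\<And>j. fls_nth (zpoly P) (- int j) = fls_nth (zpoly Q) (- int j)" by simp
  then show "P = Q" by (simp add: zpoly_nth poly_eq_iff)
qed simp

lemma zpoly_nz: "P \<noteq> 0 \<Longrightarrow> zpoly P \<noteq> 0"
  using zpoly_eq_iff[of P 0] by simp

lemma zpoly_sum: "zpoly P = (\<Sum>i\<le>degree P. fls_const (coeff P i) * fls_X_inv ^ i)"
proof -
  have "degree (map_poly fls_const P) = degree P"
    by (rule degree_map_poly) simp
  then show ?thesis unfolding zpoly_def poly_altdef by (simp add: coeff_map_poly)
qed

lemma mult_zpoly_nth: "fls_nth (g * zpoly P) k = (\<Sum>i\<le>degree P. coeff P i * fls_nth g (k + int i))"
  unfolding zpoly_sum sum_distrib_left fls_nth_sum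
proof (intro sum.cong refl)
  fix i
  have "g * (fls_const (coeff P i) * fls_X_inv ^ i) = fls_const (coeff P i) * (g * fls_X_inv ^ i)"
    by (simp add: ac_simps)
  also have "\<dots> = fls_const (coeff P i) * fls_shift (int i) g"
    by (simp only: fls_X_inv_power_times_conv_shift)
  finally have eq: "g * (fls_const (coeff P i) * fls_X_inv ^ i) = fls_const (coeff P i) * fls_shift (int i) g" .
  show "fls_nth (g * (fls_const (coeff P i) * fls_X_inv ^ i)) k = coeff P i * fls_nth g (k + int i)"
    unfolding eq by (simp only: fls_mult_const_nth fls_shift_nth)
qed

lemma fseries_nth: "fls_nth (fseries \<mu>) k = (if k \<ge> 1 then \<mu> (nat (k - 1)) else 0)"
  by (simp add: fseries_def fls_X_times_conv_shift)

lemma zpolypart_nth: "fls_nth (zpoly (zpolypart g)) k = (if k \<le> 0 then fls_nth g k else 0)"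
  by (auto simp: zpoly_nth zpolypart_def coeff_pCons split: nat.split)


lemma Lfun_ext: "degree P \<le> N \<Longrightarrow> Lfun \<mu> P = (\<Sum>k\<le>N. coeff P k * \<mu> k)"
  unfolding Lfun_def
  by (rule sum.mono_neutral_left) (auto simp: coeff_eq_0)

lemma Lfun_add: "Lfun \<mu> (P + Q) = Lfun \<mu> P + Lfun \<mu> Q"
proof -
  define N where "N = max (degree P) (degree Q)"
  have "degree (P + Q) \<le> N" unfolding N_def by (rule degree_add_le) auto
  then show ?thesis
    using Lfun_ext[of P N \<mu>] Lfun_ext[of Q N \<mu>] Lfun_ext[of "P+Q" N \<mu>]
    by (simp add: N_def algebra_simps sum.distrib)
qed

lemma Lfun_smult: "Lfun \<mu> (Polynomial.smult c P) = c * Lfun \<mu> P"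
  using Lfun_ext[of "Polynomial.smult c P" "degree P" \<mu>]
  by (simp add: Lfun_def sum_distrib_left algebra_simps)

lemma Lfun_0[simp]: "Lfun \<mu> 0 = 0" by (simp add: Lfun_def)

lemma Lfun_minus: "Lfun \<mu> (- P) = - Lfun \<mu> P"
  using Lfun_smult[of \<mu> "-1" P] by simp

lemma Lfun_diff: "Lfun \<mu> (P - Q) = Lfun \<mu> P - Lfun \<mu> Q"
  using Lfun_add[of \<mu> P "-Q"] Lfun_minus[of \<mu> Q] by simp

lemma Lfun_sum: "finite A \<Longrightarrow> Lfun \<mu> (\<Sum>i\<in>A. f i) = (\<Sum>i\<in>A. Lfun \<mu> (f i))"
  by (induction A rule: finite_induct) (simp_all add: Lfun_add)

lemma Lfun_monom: "Lfun \<mu> (monom c k) = c * \<mu> k"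
proof -
  have "\<And>ka. coeff (monom c k) ka * \<mu> ka = (if k = ka then c * \<mu> k else 0)"
    by (simp add: coeff_monom)
  then show ?thesis using Lfun_ext[of "monom c k" k \<mu>] by (simp add: degree_monom_le)
qed

lemma Lfun_xpow: "Lfun \<mu> (monom 1 j * P) = (\<Sum>i\<le>degree P. coeff P i * \<mu> (j + i))"
proof -
  have "monom 1 j * P = monom 1 j * (\<Sum>i\<le>degree P. monom (coeff P i) i)"
    by (simp add: poly_as_sum_of_monoms)
  also have "\<dots> = (\<Sum>i\<le>degree P. monom (coeff P i) (j + i))"
    by (simp add: sum_distrib_left mult_monom)
  finally show ?thesis by (simp add: Lfun_sum Lfun_monom)
qed

definition qq :: "(nat \<Rightarrow> complex) \<Rightarrow> (nat \<Rightarrow> complex poly) \<Rightarrow> nat \<Rightarrow> complex poly" where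
  "qq \<mu> p m = zpolypart (fseries \<mu> * zpoly (p m))"

lemma eps_qq: "eps \<mu> p m = fseries \<mu> * zpoly (p m) - zpoly (qq \<mu> p m)"
  by (simp add: eps_def qq_def)

context
  fixes \<mu> :: "nat \<Rightarrow> complex" and p :: "nat \<Rightarrow> complex poly"
  assumes deg: "\<And>m. degree (p m) = m \<and> lead_coeff (p m) \<noteq> 0"
    and orthonormal: "\<And>m k. Lfun \<mu> (p m * p k) = (if m = k then 1 else 0)"
begin

lemma orth: "degree Q < m \<Longrightarrow> Lfun \<mu> (Q * p m) = 0"
proof (induction "degree Q" arbitrary: Q rule: less_induct)
  case less
  show ?case
  proof (cases "Q = 0")
    case False
    define d where "d = degree Q"
    define c where "c = lead_coeff Q / lead_coeff (p d)"
    define R where "R = Q - Polynomial.smult c (p d)"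
    have dd: "degree (p d) = d" "coeff (p d) d \<noteq> 0" using deg[of d] by metis+
    have "degree R \<le> d" unfolding R_def d_def using dd
      by (intro degree_diff_le) (auto simp: d_def)
    moreover have "coeff R d = 0" unfolding R_def c_def using dd by (simp add: d_def)
    ultimately have R: "R = 0 \<or> degree R < d"
      by (metis le_neq_implies_less leading_coeff_0_iff)
    have "Lfun \<mu> (R * p m) = 0"
      using R less.hyps[of R] less.prems by (auto simp: d_def)
    moreover have "Q = R + Polynomial.smult c (p d)" by (simp add: R_def)
    moreover have "d \<noteq> m" using less.prems by (simp add: d_def)
    ultimately show ?thesis
      using orthonormal[of d m] by (simp add: distrib_right Lfun_add Lfun_smult)
  qed simp
qed

lemma lead_moment: "Lfun \<mu> (monom 1 m * p m) = 1 / lead_coeff (p m)"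
proof -
  define g where "g = lead_coeff (p m)"
  define R where "R = p m - monom g m"
  have g: "g \<noteq> 0" "degree (p m) = m" using deg[of m] by (metis g_def)+
  have "degree R \<le> m" unfolding R_def using g by (intro degree_diff_le) (auto simp: degree_monom_le)
  moreover have "coeff R m = 0" using g by (simp add: R_def g_def)
  ultimately have "R = 0 \<or> degree R < m"
    by (metis le_neq_implies_less leading_coeff_0_iff)
  then have R0: "Lfun \<mu> (R * p m) = 0" using orth by auto
  have "p m = Polynomial.smult g (monom 1 m) + R" by (simp add: R_def smult_monom)
  then have "1 = Lfun \<mu> ((Polynomial.smult g (monom 1 m) + R) * p m)"
    using orthonormal[of m m] by simp
  also have "\<dots> = g * Lfun \<mu> (monom 1 m * p m)"
    by (simp add: distrib_right Lfun_add Lfun_smult R0)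
  finally show ?thesis using g by (simp add: g_def field_simps)
qed

lemma fp_nth: "k \<ge> 1 \<Longrightarrow> fls_nth (fseries \<mu> * zpoly P) k = Lfun \<mu> (monom 1 (nat (k-1)) * P)"
  unfolding mult_zpoly_nth Lfun_xpow
proof (intro sum.cong refl)
  fix i assume "k \<ge> 1"
  then have "nat (k + int i - 1) = nat (k - 1) + i" by linarith
  then show "coeff P i * fls_nth (fseries \<mu>) (k + int i) = coeff P i * \<mu> (nat (k - 1) + i)"
    using \<open>k \<ge> 1\<close> by (simp add: fseries_nth)
qed

lemma eps_nth: "fls_nth (eps \<mu> p m) k = (if k \<ge> 1 then Lfun \<mu> (monom 1 (nat (k-1)) * p m) else 0)"
  by (simp add: eps_def zpolypart_nth fp_nth)

lemma eps_low: "k \<le> int m \<Longrightarrow> fls_nth (eps \<mu> p m) k = 0"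
  by (auto simp: eps_nth intro!: orth simp: degree_monom_eq)

lemma eps_lead: "fls_nth (eps \<mu> p m) (int m + 1) = 1 / lead_coeff (p m)"
  by (simp add: eps_nth lead_moment)


lemma wronski_poly:
  assumes n: "n \<ge> 1"
  shows "qq \<mu> p n * p (n-1) - qq \<mu> p (n-1) * p n = [: lead_coeff (p n) / lead_coeff (p (n-1)) :]"
proof -
  define D where "D = qq \<mu> p n * p (n-1) - qq \<mu> p (n-1) * p n"
  have zD: "zpoly D = eps \<mu> p (n-1) * zpoly (p n) - eps \<mu> p n * zpoly (p (n-1))"
    by (simp add: D_def eps_qq algebra_simps)
  have degs: "degree (p n) = n" "degree (p (n-1)) = n - 1" using deg by auto
  have "coeff D j = (if j = 0 then lead_coeff (p n) / lead_coeff (p (n-1)) else 0)" for j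
  proof -
    have "coeff D j = fls_nth (zpoly D) (- int j)" by (simp add: zpoly_nth)
    also have "\<dots> = (\<Sum>i\<le>n. coeff (p n) i * fls_nth (eps \<mu> p (n-1)) (- int j + int i))
        - (\<Sum>i\<le>n-1. coeff (p (n-1)) i * fls_nth (eps \<mu> p n) (- int j + int i))"
      unfolding zD fls_minus_nth mult_zpoly_nth degs ..
    also have "(\<Sum>i\<le>n-1. coeff (p (n-1)) i * fls_nth (eps \<mu> p n) (- int j + int i)) = 0"
      by (intro sum.neutral ballI) (simp add: eps_low)
    also have "(\<Sum>i\<le>n. coeff (p n) i * fls_nth (eps \<mu> p (n-1)) (- int j + int i))
        = (\<Sum>i<n. coeff (p n) i * fls_nth (eps \<mu> p (n-1)) (- int j + int i))
          + coeff (p n) n * fls_nth (eps \<mu> p (n-1)) (- int j + int n)"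
      by (simp add: lessThan_Suc_atMost[symmetric])
    also have "(\<Sum>i<n. coeff (p n) i * fls_nth (eps \<mu> p (n-1)) (- int j + int i)) = 0"
      using n by (intro sum.neutral ballI) (simp add: eps_low)
    also have "fls_nth (eps \<mu> p (n-1)) (- int j + int n) = (if j = 0 then 1 / lead_coeff (p (n-1)) else 0)"
    proof (cases "j = 0")
      case True
      then show ?thesis using eps_lead[of "n-1"] n by (simp add: of_nat_diff)
    next
      case False
      then show ?thesis using n by (simp add: eps_low)
    qed
    finally show ?thesis using degs by simp
  qed
  then have "D = [: lead_coeff (p n) / lead_coeff (p (n-1)) :]"
    by (simp add: poly_eq_iff coeff_pCons split: nat.split)
  then show ?thesis by (simp only: D_def)
qed

end
lemma ode_abstract:
  fixes W W' V V' P P' P'' P1 P1' \<Theta> \<Theta>' \<Theta>1 \<Omega> \<Omega>' a K :: "'a::field"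
  assumes e1: "W*P' = (\<Omega> - V)*P - a*\<Theta>*P1"
    and e1d: "W'*P' + W*P'' = (\<Omega>' - V')*P + (\<Omega> - V)*P' - (a*\<Theta>'*P1 + a*\<Theta>*P1')"
    and e2: "W*P1' = a*\<Theta>1*P - (\<Omega>+V)*P1"
    and Wnz: "W \<noteq> 0"
    and K: "K = (\<Omega>' - V')*\<Theta> - (\<Omega> - V)*\<Theta>' + \<Theta>*(\<Omega>^2 - V^2 - a^2*\<Theta>*\<Theta>1)/W"
  shows "W*\<Theta>*P'' = (W*\<Theta>' - W'*\<Theta> - 2*V*\<Theta>)*P' + K*P"
proof -
  have WK: "W*K = W*((\<Omega>' - V')*\<Theta> - (\<Omega> - V)*\<Theta>') + \<Theta>*(\<Omega>^2 - V^2 - a^2*\<Theta>*\<Theta>1)"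
    using Wnz by (simp add: K distrib_left)
  define d1 where "d1 = W*P' - ((\<Omega> - V)*P - a*\<Theta>*P1)"
  define d1d where "d1d = W'*P' + W*P'' - ((\<Omega>' - V')*P + (\<Omega> - V)*P' - (a*\<Theta>'*P1 + a*\<Theta>*P1'))"
  define d2 where "d2 = W*P1' - (a*\<Theta>1*P - (\<Omega>+V)*P1)"
  have "W*(W*\<Theta>*P'' - ((W*\<Theta>' - W'*\<Theta> - 2*V*\<Theta>)*P' + K*P))
     = W*\<Theta>*d1d - a*\<Theta>^2*d2 + (\<Theta>*(\<Omega>+V) - W*\<Theta>')*d1
       + P*(W*((\<Omega>' - V')*\<Theta> - (\<Omega> - V)*\<Theta>') + \<Theta>*(\<Omega>^2 - V^2 - a^2*\<Theta>*\<Theta>1) - W*K)"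
    unfolding d1_def d1d_def d2_def
    by (simp add: algebra_simps power2_eq_square)
  moreover have "d1 = 0" "d1d = 0" "d2 = 0" using e1 e1d e2 by (simp_all add: d1_def d1d_def d2_def)
  ultimately show ?thesis using Wnz WK by simp
qed
lemma eq1_abstract:
  fixes W V P P' P1 E E' E1 a \<Theta> \<Omega> :: "'a::comm_ring_1"
  assumes h1: "a*(E1*P - E*P1) = 1"
    and Th: "\<Theta> = W*(E*P' - E'*P) + 2*V*E*P"
    and Om: "\<Omega> = a*W*(E1*P' - E'*P1) + a*V*(E1*P + E*P1)"
  shows "W*P' = (\<Omega> - V)*P - a*\<Theta>*P1"
proof -
  have "W*P' - ((\<Omega> - V)*P - a*\<Theta>*P1) = (W*P' + V*P)*(1 - a*(E1*P - E*P1))"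
    unfolding Th Om by (simp add: algebra_simps)
  then show ?thesis using h1 by simp
qed

lemma eq2_abstract:
  fixes W V P P' P1 P1' E E' E1 E1' a \<Theta>1 \<Omega> :: "'a::comm_ring_1"
  assumes h1: "a*(E1*P - E*P1) = 1"
    and h2: "E1'*P + E1*P' - E'*P1 - E*P1' = 0"
    and Th: "\<Theta>1 = W*(E1*P1' - E1'*P1) + 2*V*E1*P1"
    and Om: "\<Omega> = a*W*(E1*P' - E'*P1) + a*V*(E1*P + E*P1)"
  shows "W*P1' = a*\<Theta>1*P - (\<Omega>+V)*P1"
proof -
  have "W*P1' - (a*\<Theta>1*P - (\<Omega>+V)*P1) = (W*P1' + V*P1)*(1 - a*(E1*P - E*P1)) + a*W*P1*(E1'*P + E1*P' - E'*P1 - E*P1')"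
    unfolding Th Om by (simp add: algebra_simps)
  then show ?thesis using h1 h2 by simp
qed

lemma theta_abstract:
  fixes w v u f f' P P' Q Q' E E' :: "'a::comm_ring_1"
  assumes sc: "w*f' = 2*v*f + u" and E: "E = f*P - Q" and E': "E' = f'*P + f*P' - Q'"
  shows "w*(E*P' - E'*P) + 2*v*E*P = - u*P^2 + w*(Q'*P - Q*P') - 2*v*Q*P"
proof -
  have "w*(E*P' - E'*P) + 2*v*E*P - (- u*P^2 + w*(Q'*P - Q*P') - 2*v*Q*P) = - (P*P)*(w*f' - (2*v*f + u))"
    unfolding E E' by (simp add: algebra_simps power2_eq_square)
  then show ?thesis using sc by simp
qed

lemma omega_abstract:
  fixes w v u f f' P P' Q Q' P1 Q1 E E' E1 a :: "'a::comm_ring_1"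
  assumes sc: "w*f' = 2*v*f + u" and E: "E = f*P - Q" and E': "E' = f'*P + f*P' - Q'"
    and E1: "E1 = f*P1 - Q1"
  shows "a*w*(E1*P' - E'*P1) + a*v*(E1*P + E*P1) = a*(- u*P*P1 + w*(Q'*P1 - Q1*P') - v*(Q1*P + Q*P1))"
proof -
  have "a*w*(E1*P' - E'*P1) + a*v*(E1*P + E*P1) - a*(- u*P*P1 + w*(Q'*P1 - Q1*P') - v*(Q1*P + Q*P1)) = - (a*P*P1)*(w*f' - (2*v*f + u))"
    unfolding E E' E1 by (simp add: algebra_simps)
  then show ?thesis using sc by simp
qed

lemma div_abstract:
  fixes w v u P P' Q Q' P1 P1' Q1 Q1' a :: "'a::comm_ring_1"
  assumes h: "a*(Q*P1 - Q1*P) = 1"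
  defines "T \<equiv> Q'*P - Q*P'" and "T1 \<equiv> Q1'*P1 - Q1*P1'" and "S \<equiv> Q'*P1 - Q1*P'"
    and "Om0 \<equiv> - u*P*P1 - v*(Q1*P + Q*P1)" and "Th0 \<equiv> - u*P^2 - 2*v*Q*P"
    and "Th01 \<equiv> - u*P1^2 - 2*v*Q1*P1"
  shows "(a*(- u*P*P1 + w*(Q'*P1 - Q1*P') - v*(Q1*P + Q*P1)))^2 - v^2
     - a^2*(- u*P^2 + w*(Q'*P - Q*P') - 2*v*Q*P)*(- u*P1^2 + w*(Q1'*P1 - Q1*P1') - 2*v*Q1*P1)
     = w * (a^2*(w*S^2 + 2*S*Om0 - (w*T*T1 + T*Th01 + Th0*T1)))"
proof -
  have "(a*(- u*P*P1 + w*(Q'*P1 - Q1*P') - v*(Q1*P + Q*P1)))^2 - v^2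
     - a^2*(- u*P^2 + w*(Q'*P - Q*P') - 2*v*Q*P)*(- u*P1^2 + w*(Q1'*P1 - Q1*P1') - 2*v*Q1*P1)
     - w * (a^2*(w*S^2 + 2*S*Om0 - (w*T*T1 + T*Th01 + Th0*T1)))
     = v^2 * ((a*(Q*P1 - Q1*P))^2 - 1)"
    unfolding T_def T1_def S_def Om0_def Th0_def Th01_def by (simp add: algebra_simps power2_eq_square)
  then show ?thesis using h by simp
qed

theorem mainTheorem4:
  fixes \<mu> :: "nat \<Rightarrow> complex" and p :: "nat \<Rightarrow> complex poly"
    and W V U :: "complex poly" and n :: nat
  assumes hankel: "\<And>m. hankel_det \<mu> m \<noteq> 0"
    and deg: "\<And>m. degree (p m) = m \<and> lead_coeff (p m) \<noteq> 0"
    and orthonormal: "\<And>m k. Lfun \<mu> (p m * p k) = (if m = k then 1 else 0)"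
    and W_nz: "W \<noteq> 0"
    and semiclassical: "zpoly W * Dz (fseries \<mu>) = 2 * zpoly V * fseries \<mu> + zpoly U"
    and n: "n \<ge> 1"
  shows "(zpoly W * Theta \<mu> p W V n * Dz (Dz (zpoly (p n))) =
           (zpoly W * Dz (Theta \<mu> p W V n) - Dz (zpoly W) * Theta \<mu> p W V n
              - 2 * zpoly V * Theta \<mu> p W V n) * Dz (zpoly (p n))
           + Kcoef \<mu> p W V n * zpoly (p n))
         \<and> (\<exists>Q. Kcoef \<mu> p W V n = zpoly Q)"
proof -
  define F where "F = fseries \<mu>"
  define a where "a = acoef p n"
  define c where "c = lead_coeff (p n) / lead_coeff (p (n-1))"
  have sc: "zpoly W * Dz F = 2 * zpoly V * F + zpoly U" using semiclassical by (simp add: F_def)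
  have lc: "lead_coeff (p n) \<noteq> 0" "lead_coeff (p (n-1)) \<noteq> 0" using deg by blast+
  have ac: "a * c = 1" using lc by (simp add: a_def c_def acoef_def)
  have wp: "qq \<mu> p n * p (n-1) - qq \<mu> p (n-1) * p n = [:c:]"
    unfolding c_def by (rule wronski_poly[OF _ _ n]) (use deg orthonormal in blast)+
  have epsE: "\<And>m. eps \<mu> p m = F * zpoly (p m) - zpoly (qq \<mu> p m)"
    by (simp add: eps_qq F_def)
  have epsD: "\<And>m. Dz (eps \<mu> p m) = Dz F * zpoly (p m) + F * zpoly (pderiv (p m)) - zpoly (pderiv (qq \<mu> p m))"
    by (simp add: epsE)
  have wf: "eps \<mu> p (n-1) * zpoly (p n) - eps \<mu> p n * zpoly (p (n-1)) = fls_const c"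
  proof -
    have "eps \<mu> p (n-1) * zpoly (p n) - eps \<mu> p n * zpoly (p (n-1)) = zpoly (qq \<mu> p n * p (n-1) - qq \<mu> p (n-1) * p n)"
      by (simp add: epsE algebra_simps)
    then show ?thesis unfolding wp by simp
  qed
  have h1: "fls_const a * (eps \<mu> p (n-1) * zpoly (p n) - eps \<mu> p n * zpoly (p (n-1))) = 1"
    unfolding wf by (simp add: ac)
  have h2: "Dz (eps \<mu> p (n-1)) * zpoly (p n) + eps \<mu> p (n-1) * Dz (zpoly (p n))
      - Dz (eps \<mu> p n) * zpoly (p (n-1)) - eps \<mu> p n * Dz (zpoly (p (n-1))) = 0"
    using arg_cong[where f=Dz, OF wf] by (simp add: algebra_simps)
  have ThE: "\<And>m. Theta \<mu> p W V m = zpoly W * (eps \<mu> p m * Dz (zpoly (p m)) - Dz (eps \<mu> p m) * zpoly (p m))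
        + 2 * zpoly V * eps \<mu> p m * zpoly (p m)"
    by (simp add: Theta_def)
  have OmE: "Omega \<mu> p W V n = fls_const a * zpoly W * (eps \<mu> p (n-1) * Dz (zpoly (p n)) - Dz (eps \<mu> p n) * zpoly (p (n-1)))
        + fls_const a * zpoly V * (eps \<mu> p (n-1) * zpoly (p n) + eps \<mu> p n * zpoly (p (n-1)))"
    by (simp add: Omega_def a_def)
  have e1: "zpoly W * Dz (zpoly (p n)) = (Omega \<mu> p W V n - zpoly V) * zpoly (p n)
      - fls_const a * Theta \<mu> p W V n * zpoly (p (n-1))"
    by (rule eq1_abstract[OF h1 ThE OmE])
  have e2: "zpoly W * Dz (zpoly (p (n-1))) = fls_const a * Theta \<mu> p W V (n-1) * zpoly (p n)
      - (Omega \<mu> p W V n + zpoly V) * zpoly (p (n-1))"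
    by (rule eq2_abstract[OF h1 h2 ThE OmE])
  have e1d: "Dz (zpoly W) * Dz (zpoly (p n)) + zpoly W * Dz (Dz (zpoly (p n)))
      = (Dz (Omega \<mu> p W V n) - Dz (zpoly V)) * zpoly (p n) + (Omega \<mu> p W V n - zpoly V) * Dz (zpoly (p n))
        - (fls_const a * Dz (Theta \<mu> p W V n) * zpoly (p (n-1)) + fls_const a * Theta \<mu> p W V n * Dz (zpoly (p (n-1))))"
  proof -
    have "Dz (zpoly W * Dz (zpoly (p n))) = Dz ((Omega \<mu> p W V n - zpoly V) * zpoly (p n)
      - fls_const a * Theta \<mu> p W V n * zpoly (p (n-1)))" using e1 by simp
    then show ?thesis by (simp only: Dz_mult Dz_diff Dz_const) (simp add: algebra_simps)
  qed
  have zWnz: "zpoly W \<noteq> 0" using W_nz by (rule zpoly_nz)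
  have K: "Kcoef \<mu> p W V n = (Dz (Omega \<mu> p W V n) - Dz (zpoly V)) * Theta \<mu> p W V n
      - (Omega \<mu> p W V n - zpoly V) * Dz (Theta \<mu> p W V n)
      + Theta \<mu> p W V n * ((Omega \<mu> p W V n)^2 - (zpoly V)^2 - (fls_const a)^2 * Theta \<mu> p W V n * Theta \<mu> p W V (n-1)) / zpoly W"
    by (simp add: Kcoef_def Let_def a_def)
  have part1: "zpoly W * Theta \<mu> p W V n * Dz (Dz (zpoly (p n))) =
           (zpoly W * Dz (Theta \<mu> p W V n) - Dz (zpoly W) * Theta \<mu> p W V n
              - 2 * zpoly V * Theta \<mu> p W V n) * Dz (zpoly (p n))
           + Kcoef \<mu> p W V n * zpoly (p n)"
    by (rule ode_abstract[OF e1 e1d e2 zWnz K])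
  define ThP where "ThP m = - U*(p m)^2 + W*(pderiv (qq \<mu> p m)*p m - qq \<mu> p m*pderiv (p m)) - 2*V*qq \<mu> p m*p m" for m
  have ThZ: "Theta \<mu> p W V m = zpoly (ThP m)" for m
  proof -
    have "Theta \<mu> p W V m = - zpoly U*(zpoly (p m))^2 + zpoly W*(zpoly (pderiv (qq \<mu> p m))*zpoly (p m)
        - zpoly (qq \<mu> p m)*zpoly (pderiv (p m))) - 2*zpoly V*zpoly (qq \<mu> p m)*zpoly (p m)"
      unfolding ThE Dz_zpoly by (rule theta_abstract[OF sc epsE]) (simp add: epsD)
    then show ?thesis by (simp add: ThP_def)
  qed
  define A where "A = [:a:]"
  define OmP where "OmP = A*(- U*p n*p (n-1) + W*(pderiv (qq \<mu> p n)*p (n-1) - qq \<mu> p (n-1)*pderiv (p n))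
      - V*(qq \<mu> p (n-1)*p n + qq \<mu> p n*p (n-1)))"
  have OmZ: "Omega \<mu> p W V n = zpoly OmP"
  proof -
    have "Omega \<mu> p W V n = fls_const a*(- zpoly U*zpoly (p n)*zpoly (p (n-1)) + zpoly W*(zpoly (pderiv (qq \<mu> p n))*zpoly (p (n-1))
        - zpoly (qq \<mu> p (n-1))*zpoly (pderiv (p n))) - zpoly V*(zpoly (qq \<mu> p (n-1))*zpoly (p n) + zpoly (qq \<mu> p n)*zpoly (p (n-1))))"
      unfolding OmE Dz_zpoly by (rule omega_abstract[OF sc epsE _ epsE]) (simp add: epsD)
    then show ?thesis by (simp add: OmP_def A_def)
  qed
  have hA: "A*(qq \<mu> p n*p (n-1) - qq \<mu> p (n-1)*p n) = 1"
    unfolding wp A_def using ac by (simp add: one_pCons mult.commute)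
  obtain X where X: "OmP^2 - V^2 - A^2*ThP n*ThP (n-1) = W * X"
    unfolding OmP_def ThP_def using div_abstract[OF hA, where w=W and v=V and u=U and P'="pderiv (p n)" and Q'="pderiv (qq \<mu> p n)" and P1'="pderiv (p (n-1))" and Q1'="pderiv (qq \<mu> p (n-1))"] by blast
  define KP where "KP = pderiv (OmP - V) * ThP n - (OmP - V) * pderiv (ThP n) + ThP n * X"
  have "Kcoef \<mu> p W V n = zpoly KP"
  proof -
    have "Theta \<mu> p W V n * ((Omega \<mu> p W V n)^2 - (zpoly V)^2 - (fls_const a)^2 * Theta \<mu> p W V n * Theta \<mu> p W V (n-1))
        = zpoly (ThP n * (OmP^2 - V^2 - A^2*ThP n*ThP (n-1)))"
      by (simp add: ThZ OmZ A_def)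
    also have "\<dots> = zpoly W * zpoly (ThP n * X)" unfolding X by (simp add: ac_simps)
    finally have "Theta \<mu> p W V n * ((Omega \<mu> p W V n)^2 - (zpoly V)^2 - (fls_const a)^2 * Theta \<mu> p W V n * Theta \<mu> p W V (n-1)) / zpoly W
        = zpoly (ThP n * X)" using zWnz by simp
    then show ?thesis unfolding K by (simp add: KP_def ThZ OmZ pderiv_diff)
  qed
  then show ?thesis using part1 by blast
qed

end
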